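(* For all distinct positive real numbers $a$ and $b$, $$1< \frac{I(a,b)}{\sqrt{I\big(A(a,b)^2,G(a,b)^2\big)}} < \frac{2}{\sqrt{e}}.$$ Both bounds are sharp (the constants $1$ and $2/\sqrt e$ cannot be replaced by larger, respectively smaller, constants).
   Context: For positive reals $x\neq y$: arithmetic mean $A(x,y)=\frac{x+y}{2}$, geometric mean $G(x,y)=\sqrt{xy}$, and identric mean $I(x,y)=\frac{1}{e}\left(\frac{x^x}{y^y}\right)^{1/(x-y)}$. *)

theory Defs
  imports Complex_Main
begin

definition AM :: "real \<Rightarrow> real \<Rightarrow> real" where
  "AM x y = (x + y) / 2"

definition GM :: "real \<Rightarrow> real \<Rightarrow> real" where
  "GM x y = sqrt (x * y)"

text \<open>Identric mean, for positive x different from y.\<close>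
definition IM :: "real \<Rightarrow> real \<Rightarrow> real" where
  "IM x y = (1 / exp 1) * ((x powr x) / (y powr y)) powr (1 / (x - y))"

definition ratio :: "real \<Rightarrow> real \<Rightarrow> real" where
  "ratio a b = IM a b / sqrt (IM ((AM a b)^2) ((GM a b)^2))"

end

theory Submission
  imports Defs "HOL-Real_Asymp.Real_Asymp"
begin


lemma inc_lemma:
  fixes f f' :: "real \<Rightarrow> real"
  assumes "a < b" "-1 < a" "b < 1"
    and d: "\<And>x. -1 < x \<Longrightarrow> x < 1 \<Longrightarrow> (f has_real_derivative f' x) (at x)"
    and p: "\<And>x. a < x \<Longrightarrow> x < b \<Longrightarrow> f' x > 0"
  shows "f a < f b"
proof (rule DERIV_pos_imp_increasing_open[OF assms(1)])
  fix x assume "a < x" "x < b"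
  then show "\<exists>y. DERIV f x :> y \<and> y > 0" using d p assms by (meson less_trans)
next
  show "continuous_on {a..b} f"
    by (rule continuous_at_imp_continuous_on) (use assms in \<open>auto intro!: DERIV_isCont d\<close>)
qed

definition phi :: "real \<Rightarrow> real" where
  "phi t = (1+t)*ln(1+t) + (1-t)*ln(1-t)"

lemma d_phi: "-1 < x \<Longrightarrow> x < 1 \<Longrightarrow> (phi has_real_derivative (ln(1+x) - ln(1-x))) (at x)"
  unfolding phi_def
  apply (rule DERIV_cong)
   apply (auto intro!: derivative_eq_intros)[1]
  apply simp
  done

lemma nz: "-1 < x \<Longrightarrow> x < (1::real) \<Longrightarrow> 1 - x*x \<noteq> 0 \<and> 1 + x*x - x*2 \<noteq> 0 \<and> 1 + (x*x + x*2) \<noteq> 0 \<and> 1 + x \<noteq> 0 \<and> 1 - x \<noteq> 0"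
proof -
  assume a: "-1 < x" "x < 1"
  have "0 < (1-x)*(1+x)" using a by simp
  moreover have "0 < (1-x)*(1-x)" using a by simp
  moreover have "0 < (1+x)*(1+x)" using a by simp
  ultimately show ?thesis using a by (auto simp: algebra_simps)
qed

lemma d_h1: "-1 < x \<Longrightarrow> x < 1 \<Longrightarrow> ((\<lambda>x. ln(1+x) - ln(1-x) - 2*x) has_real_derivative (2*x^2/(1-x^2))) (at x)"
  apply (rule DERIV_cong)
   apply (auto intro!: derivative_eq_intros)[1]
  apply (frule (1) nz)
  apply (simp add: field_simps power2_eq_square)
  done

lemma d_h: assumes "-1 < x" "x < 1" shows "((\<lambda>x. phi x - x^2) has_real_derivative (ln(1+x) - ln(1-x) - 2*x)) (at x)"
proof -
  have 2: "((\<lambda>x. x^2) has_real_derivative 2*x) (at x)"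
    by (rule DERIV_cong[OF DERIV_pow]) simp
  show ?thesis using DERIV_diff[OF d_phi[OF assms] 2] by simp
qed

lemma phi_lower: assumes "0 < t" "t < 1" shows "t^2 < phi t"
proof -
  have h1: "(\<lambda>x. ln(1+x) - ln(1-x) - 2*x) 0 < (\<lambda>x. ln(1+x) - ln(1-x) - 2*x) y" if "0<y" "y<1" for y :: real
  proof (rule inc_lemma[of 0 y _ "\<lambda>x. 2*x^2/(1-x^2)"])
    show "0 < y" "- 1 < (0::real)" "y < 1" using that by auto
  next
    fix x :: real assume "-1 < x" "x < 1"
    then show "((\<lambda>x. ln(1+x) - ln(1-x) - 2*x) has_real_derivative 2*x^2/(1-x^2)) (at x)"
      by (rule d_h1)
  next
    fix x :: real assume x: "0 < x" "x < y"
    then have "x^2 < 1" using that by (simp add: abs_square_less_1)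
    then show "0 < 2*x^2/(1-x^2)" using x by simp
  qed
  have "(\<lambda>x. phi x - x^2) 0 < (\<lambda>x. phi x - x^2) t"
  proof (rule inc_lemma[of 0 t _ "\<lambda>x. ln(1+x) - ln(1-x) - 2*x"])
    show "0 < t" "- 1 < (0::real)" "t < 1" using assms by auto
  next
    fix x :: real assume "-1 < x" "x < 1"
    then show "((\<lambda>x. phi x - x^2) has_real_derivative ln(1+x) - ln(1-x) - 2*x) (at x)"
      by (rule d_h)
  next
    fix x :: real assume x: "0 < x" "x < t"
    show "0 < ln(1+x) - ln(1-x) - 2*x" using h1[of x] x assms by simp
  qed
  then show ?thesis by (simp add: phi_def)
qed

definition m :: "real \<Rightarrow> real" where
  "m t = -(2+t)*ln(1+t) - (2-t)*ln(1-t)"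

lemma d_m1_eq: fixes x :: real shows "1 / (1 - x) * (0 - 1) - 1 / (1 + x) * (0 + 1) +
        (0 * (1 - x) - 1 * (0 - 1)) / ((1 - x) * (1 - x)) -
        (0 * (1 + x) - 1 * (0 + 1)) / ((1 + x) * (1 + x)) =
        1 / (1 - x)\<^sup>2 - 1 / (1 - x) + (1 / (1 + x)\<^sup>2 - 1 / (1 + x))"
proof -
  have "1 / (1 - x)\<^sup>2 = 1 / ((1 - x) * (1 - x))" "1 / (1 + x)\<^sup>2 = 1 / ((1 + x) * (1 + x))"
    by (simp_all only: power2_eq_square)
  then show ?thesis by simp
qed

lemma d_m1: "-1 < x \<Longrightarrow> x < 1 \<Longrightarrow> ((\<lambda>x. ln(1-x) - ln(1+x) + 1/(1-x) - 1/(1+x)) has_real_derivative (1/(1-x)^2 - 1/(1-x) + (1/(1+x)^2 - 1/(1+x)))) (at x)"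
  apply (rule DERIV_cong)
   apply (auto intro!: derivative_eq_intros)[1]
  apply (rule d_m1_eq)
  done

lemma d_m: "-1 < x \<Longrightarrow> x < 1 \<Longrightarrow> (m has_real_derivative (ln(1-x) - ln(1+x) + 1/(1-x) - 1/(1+x))) (at x)"
  unfolding m_def
  apply (rule DERIV_cong)
   apply (auto intro!: derivative_eq_intros)[1]
  apply (frule (1) nz)
  apply (simp add: field_simps)
  done

lemma m_pos: assumes "0 < t" "t < 1" shows "0 < m t"
proof -
  have h1: "(\<lambda>x. ln(1-x) - ln(1+x) + 1/(1-x) - 1/(1+x)) 0 < (\<lambda>x. ln(1-x) - ln(1+x) + 1/(1-x) - 1/(1+x)) y" if "0<y" "y<1" for y :: real
  proof (rule inc_lemma[of 0 y _ "\<lambda>x. 1/(1-x)^2 - 1/(1-x) + (1/(1+x)^2 - 1/(1+x))"])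
    show "0 < y" "- 1 < (0::real)" "y < 1" using that by auto
  next
    fix x :: real assume "-1 < x" "x < 1"
    then show "((\<lambda>x. ln(1-x) - ln(1+x) + 1/(1-x) - 1/(1+x)) has_real_derivative 1/(1-x)^2 - 1/(1-x) + (1/(1+x)^2 - 1/(1+x))) (at x)"
      by (rule d_m1)
  next
    fix x :: real assume x: "0 < x" "x < y"
    have d1: "1-x \<noteq> 0" "1+x \<noteq> 0" using x that by auto
    have "1/(1-x)^2 - 1/(1-x) = 1/(1-x)^2 - (1-x)/(1-x)^2" using d1 by (simp add: power2_eq_square)
    also have "\<dots> = x/(1-x)^2" by (simp add: diff_divide_distrib[symmetric])
    finally have e1: "1/(1-x)^2 - 1/(1-x) = x/(1-x)^2" .
    have "1/(1+x)^2 - 1/(1+x) = 1/(1+x)^2 - (1+x)/(1+x)^2" using d1 by (simp add: power2_eq_square)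
    also have "\<dots> = -x/(1+x)^2" by (simp add: diff_divide_distrib[symmetric])
    finally have e2: "1/(1+x)^2 - 1/(1+x) = -x/(1+x)^2" .
    have "(1-x)^2 < (1+x)^2" using x that by (simp add: power2_eq_square algebra_simps)
    moreover have "0 < (1-x)^2" using x that by simp
    ultimately have "x/(1+x)^2 < x/(1-x)^2" using x by (simp add: frac_less2)
    then have "0 < x/(1-x)^2 - x/(1+x)^2" by simp
    then show "0 < 1/(1-x)^2 - 1/(1-x) + (1/(1+x)^2 - 1/(1+x))" using e1 e2 by simp
  qed
  have "m 0 < m t"
  proof (rule inc_lemma[of 0 t _ "\<lambda>x. ln(1-x) - ln(1+x) + 1/(1-x) - 1/(1+x)"])
    show "0 < t" "- 1 < (0::real)" "t < 1" using assms by auto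
  next
    fix x :: real assume "-1 < x" "x < 1"
    then show "(m has_real_derivative ln(1-x) - ln(1+x) + 1/(1-x) - 1/(1+x)) (at x)"
      by (rule d_m)
  next
    fix x :: real assume x: "0 < x" "x < t"
    show "0 < ln(1-x) - ln(1+x) + 1/(1-x) - 1/(1+x)" using h1[of x] x assms by simp
  qed
  then show ?thesis by (simp add: m_def)
qed

lemma d_q: assumes "0 < x" "x < 1" shows "((\<lambda>x. phi x / x^2) has_real_derivative (m x / x^3)) (at x)"
proof -
  have 2: "((\<lambda>x. x^2) has_real_derivative 2*x) (at x)"
    by (rule DERIV_cong[OF DERIV_pow]) simp
  have "x^2 \<noteq> 0" using assms by simp
  from DERIV_divide[OF d_phi 2 this] assms
  have "((\<lambda>x. phi x / x^2) has_real_derivative ((ln(1+x) - ln(1-x)) * x^2 - phi x * (2*x)) / (x^2 * x^2)) (at x)"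
    by simp
  moreover have "((ln(1+x) - ln(1-x)) * x^2 - phi x * (2*x)) / (x^2 * x^2) = m x / x^3"
    using assms by (simp add: field_simps power2_eq_square power3_eq_cube m_def phi_def)
  ultimately show ?thesis by simp
qed

lemma lim1: "((\<lambda>t. phi t / t^2) \<longlongrightarrow> 2*ln 2) (at_left 1)"
  unfolding phi_def by real_asymp

lemma lim0: "((\<lambda>t. phi t / (2*t^2) - 1/2) \<longlongrightarrow> 0) (at_right 0)"
  unfolding phi_def by real_asymp

lemma lim2: "((\<lambda>t. phi t / (2*t^2) - 1/2) \<longlongrightarrow> ln 2 - 1/2) (at_left 1)"
  unfolding phi_def by real_asymp

lemma IM_eq: assumes "x > 0" "y > 0" "x \<noteq> y"
  shows "IM x y = exp ((x*ln x - y*ln y)/(x-y) - 1)"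
proof -
  have "(x powr x) / (y powr y) = exp (x*ln x - y*ln y)"
    using assms by (simp add: powr_def exp_diff mult.commute)
  then have "((x powr x) / (y powr y)) powr (1/(x-y)) = exp ((x*ln x - y*ln y)/(x-y))"
    by (simp add: powr_def)
  then show ?thesis unfolding IM_def by (simp add: exp_diff)
qed

lemma sqrt_exp: "sqrt (exp z) = exp (z/2)"
proof -
  have "exp z = (exp (z/2))^2" by (simp add: power2_eq_square flip: exp_add)
  then show ?thesis by simp
qed

lemma alg:
  fixes s d u v w :: real
  assumes "s \<noteq> 0" "d \<noteq> 0"
  shows "(((s+d)/2)*u - ((s-d)/2)*v)/d - 1 - ((((s/2)^2*(2*w) - (((s+d)/2)*((s-d)/2))*(u+v))/(d^2/4) - 1)/2)
    = ((1 + d/s)*(u-w) + (1-d/s)*(v-w))/(2*(d/s)^2) - 1/2"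
  using assms by (simp add: field_simps power2_eq_square)

lemma key: assumes "a > 0" "b > 0" "a \<noteq> b"
  shows "ratio a b = exp (phi ((a-b)/(a+b)) / (2*((a-b)/(a+b))^2) - 1/2)"
proof -
  define s where "s = a + b"
  define u where "u = ln a"
  define v where "v = ln b"
  define w where "w = ln (s/2)"
  have s: "s > 0" using assms s_def by simp
  have ab: "a - b \<noteq> 0" using assms by simp
  have X: "AM a b ^2 > 0" "(GM a b)^2 = a*b" using assms by (auto simp: AM_def GM_def)
  have XY: "AM a b ^2 \<noteq> a*b"
  proof
    assume "AM a b ^2 = a*b"
    then have "(a-b)^2 = 0" by (simp add: AM_def power2_eq_square field_simps)
    then show False using ab by simp
  qed
  have lX: "ln (AM a b ^2) = 2*w" using s by (simp add: AM_def w_def s_def ln_realpow)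
  have lY: "ln (a*b) = u + v" using assms by (simp add: u_def v_def ln_mult)
  have t1: "1 + (a-b)/(a+b) = a/(s/2)" using s by (simp add: s_def field_simps)
  have t2: "1 - (a-b)/(a+b) = b/(s/2)" using s by (simp add: s_def field_simps)
  have l1: "ln (1 + (a-b)/(a+b)) = u - w" unfolding t1 using assms s by (simp add: ln_div ln_mult u_def w_def)
  have l2: "ln (1 - (a-b)/(a+b)) = v - w" unfolding t2 using assms s by (simp add: ln_div ln_mult v_def w_def)
  have "ratio a b = exp ((a*u - b*v)/(a-b) - 1) / exp ((((AM a b^2)*(2*w) - (a*b)*(u+v))/(AM a b^2 - a*b) - 1) / 2)"
    unfolding ratio_def using assms X XY
    by (simp add: IM_eq u_def v_def lX lY sqrt_exp diff_divide_distrib)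
  also have "\<dots> = exp ((a*u - b*v)/(a-b) - 1 - ((((AM a b^2)*(2*w) - (a*b)*(u+v))/(AM a b^2 - a*b) - 1) / 2))"
    by (simp add: exp_diff)
  also have "(a*u - b*v)/(a-b) - 1 - ((((AM a b^2)*(2*w) - (a*b)*(u+v))/(AM a b^2 - a*b) - 1) / 2)
     = phi ((a-b)/(a+b)) / (2*((a-b)/(a+b))^2) - 1/2"
  proof -
    have e1: "AM a b = s/2" by (simp add: AM_def s_def)
    have e2: "AM a b^2 - a*b = (a-b)^2/4" by (simp add: AM_def power2_eq_square field_simps)
    have e3: "(s + (a-b))/2 = a" "(s - (a-b))/2 = b" by (simp_all add: s_def)
    have "s \<noteq> 0" using s by simp
    from alg[OF this ab, of u v w] show ?thesis
      unfolding phi_def l1 l2 e3 e2 by (simp add: e1 s_def)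
  qed
  finally show ?thesis .
qed

lemma inc2:
  fixes f f' :: "real \<Rightarrow> real"
  assumes "a < b" "0 < a" "b < 1"
    and d: "\<And>x. 0 < x \<Longrightarrow> x < 1 \<Longrightarrow> (f has_real_derivative f' x) (at x)"
    and p: "\<And>x. a < x \<Longrightarrow> x < b \<Longrightarrow> f' x > 0"
  shows "f a < f b"
proof (rule DERIV_pos_imp_increasing_open[OF assms(1)])
  fix x assume "a < x" "x < b"
  then show "\<exists>y. DERIV f x :> y \<and> y > 0" using d p assms by (meson less_trans)
next
  show "continuous_on {a..b} f"
    by (rule continuous_at_imp_continuous_on) (use assms in \<open>auto intro!: DERIV_isCont d\<close>)
qed

lemma q_mono: assumes "0 < s" "s < u" "u < 1" shows "phi s / s^2 < phi u / u^2"
  apply (rule inc2[of s u _ "\<lambda>x. m x / x^3"])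
  using assms apply auto[3]
   apply (rule d_q, assumption+)
  using assms by (auto intro!: divide_pos_pos m_pos)

lemma phi_upper: assumes "0 < t" "t < 1" shows "phi t < 2*ln 2 * t^2"
proof -
  define t' where "t' = (1+t)/2"
  have t': "t < t'" "t' < 1" using assms by (auto simp: t'_def)
  have "eventually (\<lambda>u. phi t' / t'^2 \<le> phi u / u^2) (at_left 1)"
    using eventually_at_left_real[OF t'(2)]
    by eventually_elim (use t' assms in \<open>auto intro!: less_imp_le q_mono\<close>)
  then have "phi t' / t'^2 \<le> 2 * ln 2"
    by (intro tendsto_lowerbound[OF lim1]) auto
  moreover have "phi t / t^2 < phi t' / t'^2" using q_mono assms t' by auto
  ultimately have "phi t / t^2 < 2 * ln 2" by linarith
  then show ?thesis using assms by (simp add: divide_simps)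
qed

lemma F_bounds: assumes "-1 < t" "t < 1" "t \<noteq> 0"
  shows "0 < phi t / (2*t^2) - 1/2 \<and> phi t / (2*t^2) - 1/2 < ln 2 - 1/2"
proof -
  have ev: "phi (-t) = phi t" by (simp add: phi_def algebra_simps)
  have "\<bar>t\<bar>^2 < phi \<bar>t\<bar> \<and> phi \<bar>t\<bar> < 2*ln 2*\<bar>t\<bar>^2"
    using assms phi_lower[of "\<bar>t\<bar>"] phi_upper[of "\<bar>t\<bar>"] by auto
  then have "t^2 < phi t \<and> phi t < 2*ln 2*t^2"
    by (cases "t \<ge> 0") (auto simp: ev)
  moreover have "t^2 > 0" using assms by simp
  ultimately show ?thesis by (simp add: divide_simps algebra_simps)
qed

lemma const_eq: "2 / sqrt (exp 1) = exp (ln 2 - 1/2)"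
  by (simp add: sqrt_exp exp_diff)

theorem theorem1:
  shows "(\<forall>a b::real. 0 < a \<longrightarrow> 0 < b \<longrightarrow> a \<noteq> b \<longrightarrow>
            1 < ratio a b \<and> ratio a b < 2 / sqrt (exp 1))
       \<and> (\<forall>c::real. c > 1 \<longrightarrow>
            (\<exists>a b::real. 0 < a \<and> 0 < b \<and> a \<noteq> b \<and> ratio a b < c))
       \<and> (\<forall>c::real. c < 2 / sqrt (exp 1) \<longrightarrow>
            (\<exists>a b::real. 0 < a \<and> 0 < b \<and> a \<noteq> b \<and> c < ratio a b))"
proof (intro conjI allI impI)
  have main: "1 < ratio a b \<and> ratio a b < 2 / sqrt (exp 1)" if "0 < a" "0 < b" "a \<noteq> b" for a b :: real
  proof -
    have "\<bar>a - b\<bar> < a + b" using that by auto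
    then have "-1 < (a-b)/(a+b)" "(a-b)/(a+b) < 1" using that by (auto simp: divide_simps abs_less_iff)
    moreover have "(a-b)/(a+b) \<noteq> 0" using that by simp
    ultimately have B: "0 < phi ((a-b)/(a+b)) / (2*((a-b)/(a+b))^2) - 1/2"
      "phi ((a-b)/(a+b)) / (2*((a-b)/(a+b))^2) - 1/2 < ln 2 - 1/2"
      using F_bounds by blast+
    show ?thesis unfolding key[OF that] const_eq using B by simp
  qed
  fix a b :: real
  assume "0 < a" "0 < b" "a \<noteq> b"
  then show "1 < ratio a b" "ratio a b < 2 / sqrt (exp 1)" using main by blast+
next
  fix c :: real assume c: "c > 1"
  then have "ln c > 0" by simp
  then have "eventually (\<lambda>t. phi t / (2*t^2) - 1/2 < ln c) (at_right 0)"
    using order_tendstoD(2)[OF lim0] by blast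
  then have "eventually (\<lambda>t. phi t / (2*t^2) - 1/2 < ln c \<and> t \<in> {0<..<1}) (at_right 0)"
    using eventually_at_right_real[of 0 1] by (auto elim: eventually_elim2)
  from eventually_happens'[OF trivial_limit_at_right_real this]
  obtain t where t: "phi t / (2*t^2) - 1/2 < ln c" "0 < t" "t < 1" by auto
  have r: "ratio (1+t) (1-t) = exp (phi t / (2*t^2) - 1/2)"
    using key[of "1+t" "1-t"] t by simp
  show "\<exists>a b::real. 0 < a \<and> 0 < b \<and> a \<noteq> b \<and> ratio a b < c"
  proof (intro exI conjI)
    have "exp (phi t / (2*t^2) - 1/2) < exp (ln c)" using t by simp
    then show "ratio (1+t) (1-t) < c" unfolding r using c by simp
  qed (use t in auto)
next
  fix c :: real assume c: "c < 2 / sqrt (exp 1)"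
  have main: "1 < ratio a b" if "0 < a" "0 < b" "a \<noteq> b" for a b :: real
  proof -
    have "\<bar>a - b\<bar> < a + b" using that by auto
    then have "-1 < (a-b)/(a+b)" "(a-b)/(a+b) < 1" using that by (auto simp: divide_simps abs_less_iff)
    moreover have "(a-b)/(a+b) \<noteq> 0" using that by simp
    ultimately have B: "0 < phi ((a-b)/(a+b)) / (2*((a-b)/(a+b))^2) - 1/2"
      using F_bounds by blast+
    show ?thesis unfolding key[OF that] using B by simp
  qed
  show "\<exists>a b::real. 0 < a \<and> 0 < b \<and> a \<noteq> b \<and> c < ratio a b"
  proof (cases "c \<le> 1")
    case True
    then show ?thesis using main[of 2 1] by (intro exI[of _ 2] exI[of _ 1]) auto
  next
    case False
    then have "exp (ln c) < exp (ln 2 - 1/2)" using c unfolding const_eq by simp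
    then have "ln c < ln 2 - 1/2" by simp
    then have "eventually (\<lambda>t. ln c < phi t / (2*t^2) - 1/2) (at_left 1)"
      using order_tendstoD(1)[OF lim2] by blast
    then have "eventually (\<lambda>t. ln c < phi t / (2*t^2) - 1/2 \<and> t \<in> {0<..<1}) (at_left 1)"
      using eventually_at_left_real[of 0 1] by (auto elim: eventually_elim2)
    from eventually_happens'[OF trivial_limit_at_left_real this]
    obtain t where t: "ln c < phi t / (2*t^2) - 1/2" "0 < t" "t < 1" by auto
    have r: "ratio (1+t) (1-t) = exp (phi t / (2*t^2) - 1/2)"
      using key[of "1+t" "1-t"] t by simp
    show ?thesis
    proof (intro exI conjI)
      have "exp (ln c) < exp (phi t / (2*t^2) - 1/2)" using t by simp
      then show "c < ratio (1+t) (1-t)" unfolding r using False by simp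
    qed (use t in auto)
  qed
qed

end
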